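(* Let $\delta_j,\delta_k$ be coprime integers with $1<\delta_j<\delta_k$, and let $(x_k,x_j)$ be a B\'ezout couple for $(\delta_k,\delta_j)$ associated to $i=x_k\delta_k+x_j\delta_j$ with $i\le\delta_j$. Then $\big(\lfloor\delta_k/\delta_j\rfloor x_k+x_j,\ x_k\big)$ is a B\'ezout couple for $(\delta_j,\ \delta_k\bmod\delta_j)$.
   Context: For coprime positive integers $p,q$, a B\'ezout couple for $(p,q)$ associated to $i\in\{1,\ldots,\max\{p,q\}\}$ is a pair $(x,y)\in\mathbb Z^2$ with $xp+yq=i$ and either $0<y\le p$ (the $\lambda$-B\'ezout couple of $i$, unique) or $0<x\le q$ (the $\mu$-B\'ezout couple of $i$, unique). Note $\delta_k\bmod\delta_j\ge1$ is coprime to $\delta_j$. *)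

theory Defs
  imports Main
begin

definition bezout_couple :: "int \<Rightarrow> int \<Rightarrow> int \<Rightarrow> int \<Rightarrow> int \<Rightarrow> bool" where
  "bezout_couple p q i x y \<longleftrightarrow>
     p > 0 \<and> q > 0 \<and> coprime p q \<and> 1 \<le> i \<and> i \<le> max p q \<and>
     x * p + y * q = i \<and> ((0 < y \<and> y \<le> p) \<or> (0 < x \<and> x \<le> q))"

end

theory Submission
  imports Defs
begin

theorem lemma3p1:
  fixes dj dk xk xj i :: int
  assumes "coprime dj dk" and "1 < dj" and "dj < dk"
    and "bezout_couple dk dj i xk xj"
    and "i \<le> dj"
  shows "bezout_couple dj (dk mod dj) i ((dk div dj) * xk + xj) xk"
proof -
  define r where "r = dk mod dj"
  define q where "q = dk div dj"
  define x' where "x' = q * xk + xj"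
  have dk: "dk = q * dj + r" unfolding q_def r_def by simp
  have B: "xk * dk + xj * dj = i" "1 \<le> i"
    "(0 < xj \<and> xj \<le> dk) \<or> (0 < xk \<and> xk \<le> dj)"
    using assms(4) unfolding bezout_couple_def by auto
  have r0: "0 \<le> r" "r < dj" unfolding r_def using assms(2) by auto
  have cop: "coprime dj r" unfolding r_def
    using assms(1,2) by simp
  have "r \<noteq> 0"
  proof
    assume "r = 0"
    then have "dj dvd dk" using dk by simp
    then have "is_unit dj" using assms(1) by (simp add: coprime_absorb_left)
    then show False using assms(2) by simp
  qed
  hence rpos: "r > 0" using r0 by simp
  have eq: "x' * dj + xk * r = i" using B(1) unfolding x'_def dk by (simp add: algebra_simps)
  have alt: "(0 < xk \<and> xk \<le> dj) \<or> (0 < x' \<and> x' \<le> r)"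
  proof (cases "0 < xk \<and> xk \<le> dj")
    case True then show ?thesis by simp
  next
    case False
    with B(3) have xj: "0 < xj" "xj \<le> dk" by auto
    have "\<not> xk > dj"
    proof
      assume "xk > dj"
      hence "xk * dk \<ge> (dj+1) * dk" using assms by (intro mult_right_mono) auto
      moreover have "xj * dj > 0" using xj assms by simp
      moreover have "dj * dk \<ge> dj" using assms(2,3) by simp
      moreover have "(dj+1)*dk = dj*dk + dk" by (simp add: algebra_simps)
      ultimately show False using B(1) assms(2,3,5) by linarith
    qed
    with False have xk0: "xk \<le> 0" by auto
    have "xj * dj \<le> dk * dj" using xj assms by (intro mult_right_mono) auto
    hence "(-xk) * dk \<le> dk * dj - 1" using B by (simp add: algebra_simps)
    hence "(-xk) * dk < dj * dk" by (simp add: algebra_simps)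
    moreover have "0 \<le> dk" using assms(2,3) by simp
    ultimately have "-xk < dj" by (rule mult_right_less_imp_less)
    hence xkb: "-xk \<le> dj - 1" by simp
    have "(-xk) * r \<le> (dj - 1) * r" using xkb rpos by (intro mult_right_mono) auto
    hence "x' * dj \<le> dj + (dj-1)*r" using eq assms(5) by (simp add: algebra_simps)
    hence "x' * dj < (r+1) * dj" using rpos by (simp add: algebra_simps)
    moreover have "0 \<le> dj" using assms(2) by simp
    ultimately have "x' < r + 1" by (rule mult_right_less_imp_less)
    moreover have "xk * r \<le> 0" using xk0 rpos by (simp add: mult_nonpos_nonneg)
    hence "x' * dj \<ge> 1" using eq B(2) by linarith
    hence "x' > 0" using assms(2) mult_nonpos_nonneg[of x' dj] by (cases "x' > 0") auto
    ultimately show ?thesis by simp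
  qed
  show ?thesis unfolding bezout_couple_def r_def[symmetric] q_def[symmetric] x'_def[symmetric]
    using assms(2,5) rpos r0 cop eq B(2) alt by (simp add: max_def)
qed

end
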